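(* Fix an integer $L\ge 0$. The set function $F_1:2^V\to\mathbb{R}$, $F_1(S)=nL-\sum_{u\in V\setminus S}h^L_{uS}$, satisfies $F_1(\emptyset)=0$, is nondecreasing (i.e. $F_1(S)\le F_1(T)$ whenever $S\subseteq T\subseteq V$), and is submodular (i.e. for all $S\subseteq T\subseteq V$ and $j\in V\setminus T$, $F_1(S\cup\{j\})-F_1(S)\ge F_1(T\cup\{j\})-F_1(T)$).
   Context: Let $G=(V,E)$ be a finite undirected, unweighted graph with $n=|V|$ nodes in which every node $u$ has degree $d_u\ge 1$. For $u\in V$, the random walk starting at $u$ is the Markov chain $(Z_u^t)_{t\ge 0}$ with $Z_u^0=u$ and $Z_u^{t+1}$ chosen uniformly at random among the neighbors of $Z_u^t$. For $S\subseteq V$ and $u\in V$, define $T^L_{uS}=\min\{\min\{t\ge 0: Z_u^t\in S\},\,L\}$ (with $\min\emptyset=\infty$), and $h^L_{uS}=\mathbb{E}[T^L_{uS}]$. *)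

theory Defs
  imports "HOL-Probability.Probability"
begin

definition nbrs :: "('a \<Rightarrow> 'a \<Rightarrow> bool) \<Rightarrow> 'a \<Rightarrow> 'a set" where
  "nbrs E u = {v. E u v}"

definition undirected_graph :: "'a set \<Rightarrow> ('a \<Rightarrow> 'a \<Rightarrow> bool) \<Rightarrow> bool" where
  "undirected_graph V E \<longleftrightarrow> finite V \<and> (\<forall>u v. E u v \<longrightarrow> u \<in> V \<and> v \<in> V)
     \<and> (\<forall>u v. E u v \<longrightarrow> E v u)"

text \<open>Distribution of the first k steps of the simple random walk started at u:
the list [Z^0, Z^1, ..., Z^k], each next vertex uniform among the neighbours.\<close>

primrec walk :: "('a \<Rightarrow> 'a \<Rightarrow> bool) \<Rightarrow> nat \<Rightarrow> 'a \<Rightarrow> 'a list pmf" where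
  "walk E 0 u = return_pmf [u]"
| "walk E (Suc k) u =
     pmf_of_set (nbrs E u) \<bind> (\<lambda>v. map_pmf (\<lambda>p. u # p) (walk E k v))"

text \<open>Truncated hitting time T^L = min(first t with Z^t in S, L), as a function of
the trajectory Z^0 .. Z^L.\<close>

definition trunc_hit :: "nat \<Rightarrow> 'a set \<Rightarrow> 'a list \<Rightarrow> nat" where
  "trunc_hit L S p = (if \<exists>t<L. p ! t \<in> S then (LEAST t. p ! t \<in> S) else L)"

definition hit_exp :: "('a \<Rightarrow> 'a \<Rightarrow> bool) \<Rightarrow> nat \<Rightarrow> 'a \<Rightarrow> 'a set \<Rightarrow> real" where
  "hit_exp E L u S = measure_pmf.expectation (walk E L u) (\<lambda>p. real (trunc_hit L S p))"

definition F1 :: "'a set \<Rightarrow> ('a \<Rightarrow> 'a \<Rightarrow> bool) \<Rightarrow> nat \<Rightarrow> 'a set \<Rightarrow> real" where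
  "F1 V E L S = real (card V) * real L - (\<Sum>u\<in>V - S. hit_exp E L u S)"

end

theory Submission
  imports Defs
begin

lemma trunc_hit_Min:
  "trunc_hit L S p = Min (insert L {t. t < L \<and> p ! t \<in> S})"
proof (cases "\<exists>t<L. p ! t \<in> S")
  case True
  then obtain t where t: "t < L" "p ! t \<in> S" by blast
  define m where "m = (LEAST t. p ! t \<in> S)"
  have m1: "p ! m \<in> S" unfolding m_def using t(2) by (rule LeastI)
  have m2: "m \<le> t" unfolding m_def using t(2) by (rule Least_le)
  have m3: "\<And>s. p ! s \<in> S \<Longrightarrow> m \<le> s" unfolding m_def by (rule Least_le)
  have fin: "finite (insert L {t. t < L \<and> p ! t \<in> S})" by auto
  have "Min (insert L {t. t < L \<and> p ! t \<in> S}) = m"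
  proof (rule Min_eqI[OF fin])
    have mL: "m < L" using m2 t by simp
    show "m \<in> insert L {t. t < L \<and> p ! t \<in> S}" using mL m1 by simp
    fix y assume "y \<in> insert L {t. t < L \<and> p ! t \<in> S}"
    then show "m \<le> y" using mL m3 by auto
  qed
  then show ?thesis using True unfolding trunc_hit_def m_def by simp
next
  case False
  then have e: "{t. t < L \<and> p ! t \<in> S} = {}" by auto
  show ?thesis unfolding e using False unfolding trunc_hit_def by auto
qed

lemma trunc_hit_le: "trunc_hit L S p \<le> L"
  unfolding trunc_hit_Min by simp

lemma trunc_hit_union:
  "trunc_hit L (A \<union> B) p = min (trunc_hit L A p) (trunc_hit L B p)"
proof -
  have e: "insert L {t. t < L \<and> p ! t \<in> A \<union> B} =
     insert L {t. t < L \<and> p ! t \<in> A} \<union> insert L {t. t < L \<and> p ! t \<in> B}" by auto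
  show ?thesis unfolding trunc_hit_Min e
    by (rule Min_Un) auto
qed

lemma trunc_hit_mono: "A \<subseteq> B \<Longrightarrow> trunc_hit L B p \<le> trunc_hit L A p"
proof -
  assume "A \<subseteq> B"
  then have "B = A \<union> B" by auto
  then show ?thesis using trunc_hit_union[of L A B p] by simp
qed

lemma aux_min: "(b::nat) \<le> a \<Longrightarrow> real b - real (min b c) \<le> real a - real (min a c)"
  by (auto simp: min_def)

lemma sd: "(\<Sum>u\<in>V. (c::real) - a u) - (\<Sum>u\<in>V. c - b u) = (\<Sum>u\<in>V. b u - a u)"
  by (simp add: sum_subtractf)

lemma walk_hd: "p \<in> set_pmf (walk E k u) \<Longrightarrow> p ! 0 = u"
  by (cases k) auto

lemma trunc_hit_zero: "p ! 0 \<in> S \<Longrightarrow> trunc_hit L S p = 0"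
  unfolding trunc_hit_def by (auto intro: Least_eq_0)

lemma integ: "integrable (measure_pmf M) (\<lambda>p. real (trunc_hit L S p))"
  by (rule measure_pmf.integrable_const_bound[where B="real L"])
     (auto simp: trunc_hit_le)

lemma hit_exp_zero: "u \<in> S \<Longrightarrow> hit_exp E L u S = 0"
proof -
  assume u: "u \<in> S"
  have "hit_exp E L u S = measure_pmf.expectation (walk E L u) (\<lambda>p. 0)"
    unfolding hit_exp_def
    by (rule integral_cong_AE) (auto simp: AE_measure_pmf_iff walk_hd trunc_hit_zero u)
  then show ?thesis by simp
qed

lemma F1_alt:
  assumes "finite V" "S \<subseteq> V"
  shows "F1 V E L S = (\<Sum>u\<in>V. real L - hit_exp E L u S)"
proof -
  have "(\<Sum>u\<in>V. hit_exp E L u S) = (\<Sum>u\<in>V - S. hit_exp E L u S) + (\<Sum>u\<in>S. hit_exp E L u S)"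
    by (rule sum.subset_diff[OF assms(2,1)])
  also have "(\<Sum>u\<in>S. hit_exp E L u S) = 0" by (simp add: hit_exp_zero)
  finally show ?thesis unfolding F1_def by (simp add: sum_subtractf)
qed

lemma hit_diff:
  "hit_exp E L u A - hit_exp E L u B =
   measure_pmf.expectation (walk E L u) (\<lambda>p. real (trunc_hit L A p) - real (trunc_hit L B p))"
  unfolding hit_exp_def by (rule Bochner_Integration.integral_diff[symmetric]) (rule integ)+

theorem theorem4:
  fixes V :: "'a set" and E :: "'a \<Rightarrow> 'a \<Rightarrow> bool" and L :: nat
  assumes "undirected_graph V E"
    and "\<And>u. u \<in> V \<Longrightarrow> nbrs E u \<noteq> {}"
  shows "F1 V E L {} = 0
    \<and> (\<forall>S T. S \<subseteq> T \<and> T \<subseteq> V \<longrightarrow> F1 V E L S \<le> F1 V E L T)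
    \<and> (\<forall>S T j. S \<subseteq> T \<and> T \<subseteq> V \<and> j \<in> V - T \<longrightarrow>
          F1 V E L (S \<union> {j}) - F1 V E L S \<ge> F1 V E L (T \<union> {j}) - F1 V E L T)"
proof (intro conjI allI impI)
  have fin: "finite V" using assms(1) unfolding undirected_graph_def by auto
  have z: "hit_exp E L u {} = real L" for u
  proof -
    have "hit_exp E L u {} = measure_pmf.expectation (walk E L u) (\<lambda>p. real L)"
      unfolding hit_exp_def by (simp add: trunc_hit_def)
    then show ?thesis by simp
  qed
  show "F1 V E L {} = 0" using F1_alt[OF fin, of "{}"] by (simp add: z)
next
  fix S T assume st: "S \<subseteq> T \<and> T \<subseteq> V"
  have fin: "finite V" using assms(1) unfolding undirected_graph_def by auto
  have le: "hit_exp E L u T - hit_exp E L u S \<le> 0" for u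
    unfolding hit_diff
  proof -
    have "measure_pmf.expectation (walk E L u) (\<lambda>p. real (trunc_hit L T p) - real (trunc_hit L S p))
      \<le> measure_pmf.expectation (walk E L u) (\<lambda>p. 0)"
    proof (rule integral_mono)
      show "integrable (measure_pmf (walk E L u)) (\<lambda>p. real (trunc_hit L T p) - real (trunc_hit L S p))"
        by (rule Bochner_Integration.integrable_diff; rule integ)
      fix p show "real (trunc_hit L T p) - real (trunc_hit L S p) \<le> 0"
        using trunc_hit_mono[of S T L p] st by simp
    qed simp
    then show "measure_pmf.expectation (walk E L u) (\<lambda>p. real (trunc_hit L T p) - real (trunc_hit L S p)) \<le> 0"
      by simp
  qed
  have "(\<Sum>u\<in>V. real L - hit_exp E L u S) \<le> (\<Sum>u\<in>V. real L - hit_exp E L u T)"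
    by (rule sum_mono) (use le in force)
  then show "F1 V E L S \<le> F1 V E L T"
    using st F1_alt[OF fin, of S E L] F1_alt[OF fin, of T E L] by auto
next
  fix S T j assume st: "S \<subseteq> T \<and> T \<subseteq> V \<and> j \<in> V - T"
  have fin: "finite V" using assms(1) unfolding undirected_graph_def by auto
  have le: "hit_exp E L u T - hit_exp E L u (T \<union> {j}) \<le> hit_exp E L u S - hit_exp E L u (S \<union> {j})" for u
    unfolding hit_diff
  proof (rule integral_mono)
    show "integrable (measure_pmf (walk E L u)) (\<lambda>p. real (trunc_hit L T p) - real (trunc_hit L (T \<union> {j}) p))"
      by (rule Bochner_Integration.integrable_diff; rule integ)
    show "integrable (measure_pmf (walk E L u)) (\<lambda>p. real (trunc_hit L S p) - real (trunc_hit L (S \<union> {j}) p))"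
      by (rule Bochner_Integration.integrable_diff; rule integ)
    fix p
    have "trunc_hit L T p \<le> trunc_hit L S p" using st by (intro trunc_hit_mono) simp
    then show "real (trunc_hit L T p) - real (trunc_hit L (T \<union> {j}) p)
       \<le> real (trunc_hit L S p) - real (trunc_hit L (S \<union> {j}) p)"
      unfolding trunc_hit_union by (rule aux_min)
  qed
  have sj: "S \<union> {j} \<subseteq> V" "T \<union> {j} \<subseteq> V" "S \<subseteq> V" "T \<subseteq> V" using st by auto
  have eqS: "F1 V E L (S \<union> {j}) - F1 V E L S = (\<Sum>u\<in>V. hit_exp E L u S - hit_exp E L u (S \<union> {j}))"
    unfolding F1_alt[OF fin sj(1)] F1_alt[OF fin sj(3)] by (rule sd)
  have eqT: "F1 V E L (T \<union> {j}) - F1 V E L T = (\<Sum>u\<in>V. hit_exp E L u T - hit_exp E L u (T \<union> {j}))"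
    unfolding F1_alt[OF fin sj(2)] F1_alt[OF fin sj(4)] by (rule sd)
  have c: "(\<Sum>u\<in>V. hit_exp E L u T - hit_exp E L u (T \<union> {j}))
     \<le> (\<Sum>u\<in>V. hit_exp E L u S - hit_exp E L u (S \<union> {j}))"
    by (rule sum_mono) (rule le)
  show "F1 V E L (S \<union> {j}) - F1 V E L S \<ge> F1 V E L (T \<union> {j}) - F1 V E L T"
    unfolding eqS eqT by (rule c)
qed

end
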